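(* The category $\mathbf{bPos}$ has finite products (the product of $A$ and $B$ is the set $A\times B$ with $(a_1,b_1)\cdots(a_n,b_n)\le(a,b)$ iff $a_1\cdots a_n\le a$ in $A$ and $b_1\cdots b_n\le b$ in $B$; the terminal object is a singleton $\{*\}$ with $*\cdots *\le *$ ($n$ factors) for every $n\ge0$), but this cartesian monoidal structure is not closed: there is a broad poset $C$ (e.g. the $3$-corolla $\gamma_3$) such that the functor $C\times - :\mathbf{bPos}\to\mathbf{bPos}$ does not preserve pushouts, hence has no right adjoint. This holds in both the commutative and the non-commutative setting.
   Context: For a set $A$, $A^{\cdot}$ is the free monoid on $A$ and $A^{+}$ the free commutative monoid on $A$ (unit $\epsilon$); $A^*$ denotes one of them consistently (non-commutative resp. commutative setting). A broad poset is a set $A$ with $R\subseteq A^*\times A$ (written $b\le a$) satisfying: reflexivity $a\le a$; transitivity: $a_1\cdots a_n\le a$ and $b_i\le a_i$ ($b_i\in A^*$, $n\ge0$) imply $b_1\cdots b_n\le a$; antisymmetry for elements of $A$. Monotone maps $f$ satisfy $b\le a\Rightarrow f(b)\le f(a)$ with $f$ extended multiplicatively; $\mathbf{bPos}$ is the resulting category. $\star$ denotes the singleton broad poset $\{*\}$ whose only relation is $*\le *$. For $n\ge0$, the $n$-corolla $\gamma_n$ is the set $\{r,l_1,\dots,l_n\}$ whose only relations besides reflexivity are $l_1\cdots l_n\le r$. A witnessing pushout: $\gamma_2\leftarrow\star\rightarrow\gamma_2$, where one map picks $r$ and the other picks $l_1$. *)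

theory Defs
  imports "HOL-Library.Multiset"
begin

text \<open>A broad poset is given by a carrier set A and a relation R between words
over A (elements of A^*) and elements of A.  Morphisms are HOL functions,
compared on the carrier only.  Two settings: non-commutative (words = lists,
prefix l) and commutative (words = multisets, prefix m).\<close>

datatype cnode = Root | Leaf nat

definition corolla_carrier :: "nat \<Rightarrow> cnode set" where
  "corolla_carrier n = insert Root (Leaf ` {1..n})"

text \<open>Carrier of the grafted tree obtained as pushout of gamma_2 <- star -> gamma_2
(r of the first copy glued to l_1 of the second copy).  The first copy is
tagged False, the second True.\<close>
definition graft_carrier :: "(cnode \<times> bool) set" where
  "graft_carrier = {(Root,False),(Leaf 1,False),(Leaf 2,False),(Root,True),(Leaf 2,True)}"

definition graft_in1 :: "cnode \<Rightarrow> cnode \<times> bool" where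
  "graft_in1 x = (x, False)"

definition graft_in2 :: "cnode \<Rightarrow> cnode \<times> bool" where
  "graft_in2 x = (if x = Leaf 1 then (Root, False) else (x, True))"

definition pickR :: "unit \<Rightarrow> cnode" where "pickR u = Root"
definition pickL1 :: "unit \<Rightarrow> cnode" where "pickL1 u = Leaf 1"

section \<open>Non-commutative setting\<close>

definition lbposet :: "'a set \<Rightarrow> ('a list \<Rightarrow> 'a \<Rightarrow> bool) \<Rightarrow> bool" where
  "lbposet A R \<longleftrightarrow>
     (\<forall>w a. R w a \<longrightarrow> set w \<subseteq> A \<and> a \<in> A) \<and>
     (\<forall>a\<in>A. R [a] a) \<and>
     (\<forall>as a bs. R as a \<longrightarrow> length bs = length as \<longrightarrow>
        (\<forall>i<length as. R (bs ! i) (as ! i)) \<longrightarrow> R (concat bs) a) \<and>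
     (\<forall>a\<in>A. \<forall>b\<in>A. R [a] b \<longrightarrow> R [b] a \<longrightarrow> a = b)"

definition lmono :: "'a set \<Rightarrow> ('a list \<Rightarrow> 'a \<Rightarrow> bool) \<Rightarrow> 'b set \<Rightarrow> ('b list \<Rightarrow> 'b \<Rightarrow> bool)
    \<Rightarrow> ('a \<Rightarrow> 'b) \<Rightarrow> bool" where
  "lmono A RA B RB f \<longleftrightarrow> (\<forall>a\<in>A. f a \<in> B) \<and> (\<forall>w a. RA w a \<longrightarrow> RB (map f w) (f a))"

definition lprod_rel :: "('a list \<Rightarrow> 'a \<Rightarrow> bool) \<Rightarrow> ('b list \<Rightarrow> 'b \<Rightarrow> bool)
    \<Rightarrow> ('a \<times> 'b) list \<Rightarrow> 'a \<times> 'b \<Rightarrow> bool" where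
  "lprod_rel RA RB w p \<longleftrightarrow> RA (map fst w) (fst p) \<and> RB (map snd w) (snd p)"

definition lis_product :: "'c itself \<Rightarrow> 'a set \<Rightarrow> ('a list \<Rightarrow> 'a \<Rightarrow> bool) \<Rightarrow> 'b set \<Rightarrow> ('b list \<Rightarrow> 'b \<Rightarrow> bool)
    \<Rightarrow> 'p set \<Rightarrow> ('p list \<Rightarrow> 'p \<Rightarrow> bool) \<Rightarrow> ('p \<Rightarrow> 'a) \<Rightarrow> ('p \<Rightarrow> 'b) \<Rightarrow> bool" where
  "lis_product _ A RA B RB P RP p1 p2 \<longleftrightarrow>
     lbposet P RP \<and> lmono P RP A RA p1 \<and> lmono P RP B RB p2 \<and>
     (\<forall>(C::'c set) RC f g. lbposet C RC \<and> lmono C RC A RA f \<and> lmono C RC B RB g \<longrightarrow>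
        (\<exists>h. lmono C RC P RP h \<and> (\<forall>x\<in>C. p1 (h x) = f x \<and> p2 (h x) = g x) \<and>
           (\<forall>h'. lmono C RC P RP h' \<and> (\<forall>x\<in>C. p1 (h' x) = f x \<and> p2 (h' x) = g x)
                 \<longrightarrow> (\<forall>x\<in>C. h' x = h x))))"

definition lis_terminal :: "'c itself \<Rightarrow> 't set \<Rightarrow> ('t list \<Rightarrow> 't \<Rightarrow> bool) \<Rightarrow> bool" where
  "lis_terminal _ T RT \<longleftrightarrow> lbposet T RT \<and>
     (\<forall>(C::'c set) RC. lbposet C RC \<longrightarrow>
        (\<exists>t. lmono C RC T RT t \<and> (\<forall>t'. lmono C RC T RT t' \<longrightarrow> (\<forall>x\<in>C. t' x = t x))))"

definition lis_pushout :: "'q itself \<Rightarrow> 'x set \<Rightarrow> ('x list \<Rightarrow> 'x \<Rightarrow> bool)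
    \<Rightarrow> 'y set \<Rightarrow> ('y list \<Rightarrow> 'y \<Rightarrow> bool) \<Rightarrow> 'z set \<Rightarrow> ('z list \<Rightarrow> 'z \<Rightarrow> bool)
    \<Rightarrow> ('x \<Rightarrow> 'y) \<Rightarrow> ('x \<Rightarrow> 'z) \<Rightarrow> 'p set \<Rightarrow> ('p list \<Rightarrow> 'p \<Rightarrow> bool)
    \<Rightarrow> ('y \<Rightarrow> 'p) \<Rightarrow> ('z \<Rightarrow> 'p) \<Rightarrow> bool" where
  "lis_pushout _ X0 R0 X1 R1 X2 R2 f1 f2 P RP i1 i2 \<longleftrightarrow>
     lbposet X0 R0 \<and> lbposet X1 R1 \<and> lbposet X2 R2 \<and> lbposet P RP \<and>
     lmono X0 R0 X1 R1 f1 \<and> lmono X0 R0 X2 R2 f2 \<and>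
     lmono X1 R1 P RP i1 \<and> lmono X2 R2 P RP i2 \<and>
     (\<forall>x\<in>X0. i1 (f1 x) = i2 (f2 x)) \<and>
     (\<forall>(Q::'q set) RQ j1 j2. lbposet Q RQ \<and> lmono X1 R1 Q RQ j1 \<and> lmono X2 R2 Q RQ j2 \<and>
         (\<forall>x\<in>X0. j1 (f1 x) = j2 (f2 x)) \<longrightarrow>
        (\<exists>u. lmono P RP Q RQ u \<and> (\<forall>y\<in>X1. u (i1 y) = j1 y) \<and> (\<forall>z\<in>X2. u (i2 z) = j2 z) \<and>
           (\<forall>u'. lmono P RP Q RQ u' \<and> (\<forall>y\<in>X1. u' (i1 y) = j1 y) \<and> (\<forall>z\<in>X2. u' (i2 z) = j2 z)
                 \<longrightarrow> (\<forall>p\<in>P. u' p = u p))))"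

text \<open>E with evaluation ev : C x E -> B is an exponential B^C (w.r.t. test objects of type 't).\<close>
definition lis_exponential :: "'t itself \<Rightarrow> 'c set \<Rightarrow> ('c list \<Rightarrow> 'c \<Rightarrow> bool)
    \<Rightarrow> 'b set \<Rightarrow> ('b list \<Rightarrow> 'b \<Rightarrow> bool) \<Rightarrow> 'e set \<Rightarrow> ('e list \<Rightarrow> 'e \<Rightarrow> bool)
    \<Rightarrow> ('c \<times> 'e \<Rightarrow> 'b) \<Rightarrow> bool" where
  "lis_exponential _ C RC B RB E RE ev \<longleftrightarrow>
     lbposet E RE \<and> lmono (C \<times> E) (lprod_rel RC RE) B RB ev \<and>
     (\<forall>(A::'t set) RA f. lbposet A RA \<and> lmono (C \<times> A) (lprod_rel RC RA) B RB f \<longrightarrow>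
        (\<exists>g. lmono A RA E RE g \<and> (\<forall>c\<in>C. \<forall>a\<in>A. ev (c, g a) = f (c, a)) \<and>
           (\<forall>g'. lmono A RA E RE g' \<and> (\<forall>c\<in>C. \<forall>a\<in>A. ev (c, g' a) = f (c, a))
                 \<longrightarrow> (\<forall>a\<in>A. g' a = g a))))"

definition lcorolla_rel :: "nat \<Rightarrow> cnode list \<Rightarrow> cnode \<Rightarrow> bool" where
  "lcorolla_rel n w x \<longleftrightarrow> (x \<in> corolla_carrier n \<and> w = [x]) \<or>
                           (x = Root \<and> w = map Leaf [1..<n+1])"

definition lstar_rel :: "unit list \<Rightarrow> unit \<Rightarrow> bool" where
  "lstar_rel w x \<longleftrightarrow> w = [x]"

definition lgraft_rel :: "(cnode \<times> bool) list \<Rightarrow> cnode \<times> bool \<Rightarrow> bool" where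
  "lgraft_rel w x \<longleftrightarrow> (x \<in> graft_carrier \<and> w = [x]) \<or>
     (x = (Root,False) \<and> w = [(Leaf 1,False),(Leaf 2,False)]) \<or>
     (x = (Root,True) \<and> w = [(Root,False),(Leaf 2,True)]) \<or>
     (x = (Root,True) \<and> w = [(Leaf 1,False),(Leaf 2,False),(Leaf 2,True)])"

section \<open>Commutative setting\<close>

definition mbposet :: "'a set \<Rightarrow> ('a multiset \<Rightarrow> 'a \<Rightarrow> bool) \<Rightarrow> bool" where
  "mbposet A R \<longleftrightarrow>
     (\<forall>w a. R w a \<longrightarrow> set_mset w \<subseteq> A \<and> a \<in> A) \<and>
     (\<forall>a\<in>A. R {#a#} a) \<and>
     (\<forall>as a bs. R (mset as) a \<longrightarrow> length bs = length as \<longrightarrow>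
        (\<forall>i<length as. R (bs ! i) (as ! i)) \<longrightarrow> R (sum_list bs) a) \<and>
     (\<forall>a\<in>A. \<forall>b\<in>A. R {#a#} b \<longrightarrow> R {#b#} a \<longrightarrow> a = b)"

definition mmono :: "'a set \<Rightarrow> ('a multiset \<Rightarrow> 'a \<Rightarrow> bool) \<Rightarrow> 'b set \<Rightarrow> ('b multiset \<Rightarrow> 'b \<Rightarrow> bool)
    \<Rightarrow> ('a \<Rightarrow> 'b) \<Rightarrow> bool" where
  "mmono A RA B RB f \<longleftrightarrow> (\<forall>a\<in>A. f a \<in> B) \<and> (\<forall>w a. RA w a \<longrightarrow> RB (image_mset f w) (f a))"

definition mprod_rel :: "('a multiset \<Rightarrow> 'a \<Rightarrow> bool) \<Rightarrow> ('b multiset \<Rightarrow> 'b \<Rightarrow> bool)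
    \<Rightarrow> ('a \<times> 'b) multiset \<Rightarrow> 'a \<times> 'b \<Rightarrow> bool" where
  "mprod_rel RA RB w p \<longleftrightarrow> RA (image_mset fst w) (fst p) \<and> RB (image_mset snd w) (snd p)"

definition mis_product :: "'c itself \<Rightarrow> 'a set \<Rightarrow> ('a multiset \<Rightarrow> 'a \<Rightarrow> bool) \<Rightarrow> 'b set \<Rightarrow> ('b multiset \<Rightarrow> 'b \<Rightarrow> bool)
    \<Rightarrow> 'p set \<Rightarrow> ('p multiset \<Rightarrow> 'p \<Rightarrow> bool) \<Rightarrow> ('p \<Rightarrow> 'a) \<Rightarrow> ('p \<Rightarrow> 'b) \<Rightarrow> bool" where
  "mis_product _ A RA B RB P RP p1 p2 \<longleftrightarrow>
     mbposet P RP \<and> mmono P RP A RA p1 \<and> mmono P RP B RB p2 \<and>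
     (\<forall>(C::'c set) RC f g. mbposet C RC \<and> mmono C RC A RA f \<and> mmono C RC B RB g \<longrightarrow>
        (\<exists>h. mmono C RC P RP h \<and> (\<forall>x\<in>C. p1 (h x) = f x \<and> p2 (h x) = g x) \<and>
           (\<forall>h'. mmono C RC P RP h' \<and> (\<forall>x\<in>C. p1 (h' x) = f x \<and> p2 (h' x) = g x)
                 \<longrightarrow> (\<forall>x\<in>C. h' x = h x))))"

definition mis_terminal :: "'c itself \<Rightarrow> 't set \<Rightarrow> ('t multiset \<Rightarrow> 't \<Rightarrow> bool) \<Rightarrow> bool" where
  "mis_terminal _ T RT \<longleftrightarrow> mbposet T RT \<and>
     (\<forall>(C::'c set) RC. mbposet C RC \<longrightarrow>
        (\<exists>t. mmono C RC T RT t \<and> (\<forall>t'. mmono C RC T RT t' \<longrightarrow> (\<forall>x\<in>C. t' x = t x))))"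

definition mis_pushout :: "'q itself \<Rightarrow> 'x set \<Rightarrow> ('x multiset \<Rightarrow> 'x \<Rightarrow> bool)
    \<Rightarrow> 'y set \<Rightarrow> ('y multiset \<Rightarrow> 'y \<Rightarrow> bool) \<Rightarrow> 'z set \<Rightarrow> ('z multiset \<Rightarrow> 'z \<Rightarrow> bool)
    \<Rightarrow> ('x \<Rightarrow> 'y) \<Rightarrow> ('x \<Rightarrow> 'z) \<Rightarrow> 'p set \<Rightarrow> ('p multiset \<Rightarrow> 'p \<Rightarrow> bool)
    \<Rightarrow> ('y \<Rightarrow> 'p) \<Rightarrow> ('z \<Rightarrow> 'p) \<Rightarrow> bool" where
  "mis_pushout _ X0 R0 X1 R1 X2 R2 f1 f2 P RP i1 i2 \<longleftrightarrow>
     mbposet X0 R0 \<and> mbposet X1 R1 \<and> mbposet X2 R2 \<and> mbposet P RP \<and>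
     mmono X0 R0 X1 R1 f1 \<and> mmono X0 R0 X2 R2 f2 \<and>
     mmono X1 R1 P RP i1 \<and> mmono X2 R2 P RP i2 \<and>
     (\<forall>x\<in>X0. i1 (f1 x) = i2 (f2 x)) \<and>
     (\<forall>(Q::'q set) RQ j1 j2. mbposet Q RQ \<and> mmono X1 R1 Q RQ j1 \<and> mmono X2 R2 Q RQ j2 \<and>
         (\<forall>x\<in>X0. j1 (f1 x) = j2 (f2 x)) \<longrightarrow>
        (\<exists>u. mmono P RP Q RQ u \<and> (\<forall>y\<in>X1. u (i1 y) = j1 y) \<and> (\<forall>z\<in>X2. u (i2 z) = j2 z) \<and>
           (\<forall>u'. mmono P RP Q RQ u' \<and> (\<forall>y\<in>X1. u' (i1 y) = j1 y) \<and> (\<forall>z\<in>X2. u' (i2 z) = j2 z)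
                 \<longrightarrow> (\<forall>p\<in>P. u' p = u p))))"

definition mis_exponential :: "'t itself \<Rightarrow> 'c set \<Rightarrow> ('c multiset \<Rightarrow> 'c \<Rightarrow> bool)
    \<Rightarrow> 'b set \<Rightarrow> ('b multiset \<Rightarrow> 'b \<Rightarrow> bool) \<Rightarrow> 'e set \<Rightarrow> ('e multiset \<Rightarrow> 'e \<Rightarrow> bool)
    \<Rightarrow> ('c \<times> 'e \<Rightarrow> 'b) \<Rightarrow> bool" where
  "mis_exponential _ C RC B RB E RE ev \<longleftrightarrow>
     mbposet E RE \<and> mmono (C \<times> E) (mprod_rel RC RE) B RB ev \<and>
     (\<forall>(A::'t set) RA f. mbposet A RA \<and> mmono (C \<times> A) (mprod_rel RC RA) B RB f \<longrightarrow>
        (\<exists>g. mmono A RA E RE g \<and> (\<forall>c\<in>C. \<forall>a\<in>A. ev (c, g a) = f (c, a)) \<and>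
           (\<forall>g'. mmono A RA E RE g' \<and> (\<forall>c\<in>C. \<forall>a\<in>A. ev (c, g' a) = f (c, a))
                 \<longrightarrow> (\<forall>a\<in>A. g' a = g a))))"

definition mcorolla_rel :: "nat \<Rightarrow> cnode multiset \<Rightarrow> cnode \<Rightarrow> bool" where
  "mcorolla_rel n w x \<longleftrightarrow> (x \<in> corolla_carrier n \<and> w = {#x#}) \<or>
                           (x = Root \<and> w = mset (map Leaf [1..<n+1]))"

definition mstar_rel :: "unit multiset \<Rightarrow> unit \<Rightarrow> bool" where
  "mstar_rel w x \<longleftrightarrow> w = {#x#}"

definition mgraft_rel :: "(cnode \<times> bool) multiset \<Rightarrow> cnode \<times> bool \<Rightarrow> bool" where
  "mgraft_rel w x \<longleftrightarrow> (x \<in> graft_carrier \<and> w = {#x#}) \<or>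
     (x = (Root,False) \<and> w = {#(Leaf 1,False),(Leaf 2,False)#}) \<or>
     (x = (Root,True) \<and> w = {#(Root,False),(Leaf 2,True)#}) \<or>
     (x = (Root,True) \<and> w = {#(Leaf 1,False),(Leaf 2,False),(Leaf 2,True)#})"

end

theory Submission
  imports Defs
begin





lemma cc2: "corolla_carrier 2 = {Root, Leaf 1, Leaf 2}"
  by (auto simp: corolla_carrier_def image_iff; presburger)
lemma cc3: "corolla_carrier 3 = {Root, Leaf 1, Leaf 2, Leaf 3}"
  by (auto simp: corolla_carrier_def image_iff; presburger)
lemma upt3: "[1..<2+1] = [1,2::nat]" "[1..<3+1] = [1,2,3::nat]" by (simp_all add: upt_rec)

lemma lc2: "lcorolla_rel 2 w x \<longleftrightarrow> (x \<in> {Root, Leaf 1, Leaf 2} \<and> w=[x]) \<or> (x=Root \<and> w=[Leaf 1, Leaf 2])"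
  unfolding lcorolla_rel_def cc2 upt3 by simp
lemma lc3: "lcorolla_rel 3 w x \<longleftrightarrow> (x \<in> {Root, Leaf 1, Leaf 2, Leaf 3} \<and> w=[x]) \<or> (x=Root \<and> w=[Leaf 1, Leaf 2, Leaf 3])"
  unfolding lcorolla_rel_def cc3 upt3 by simp
lemma mc2: "mcorolla_rel 2 w x \<longleftrightarrow> (x \<in> {Root, Leaf 1, Leaf 2} \<and> w={#x#}) \<or> (x=Root \<and> w={#Leaf 1, Leaf 2#})"
  unfolding mcorolla_rel_def cc2 upt3 by simp
lemma mc3: "mcorolla_rel 3 w x \<longleftrightarrow> (x \<in> {Root, Leaf 1, Leaf 2, Leaf 3} \<and> w={#x#}) \<or> (x=Root \<and> w={#Leaf 1, Leaf 2, Leaf 3#})"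
  unfolding mcorolla_rel_def cc3 upt3 by simp



lemma len1: "length bs = Suc 0 \<Longrightarrow> bs = [bs!0]"
  by (cases bs) auto
lemma len2: "length bs = Suc (Suc 0) \<Longrightarrow> bs = [bs!0, bs!1]"
  by (cases bs; cases "tl bs") auto

lemma mset1: "mset xs = {#a#} \<Longrightarrow> xs = [a]"
  by simp
lemma mset2: "mset xs = {#a, b#} \<Longrightarrow> xs = [a,b] \<or> xs = [b,a]"
proof -
  assume h: "mset xs = {#a, b#}"
  then have "size (mset xs) = 2" by simp
  then have "length xs = Suc (Suc 0)" by simp
  then obtain x y where xs: "xs = [x,y]" using len2 by blast
  with h show ?thesis by (auto simp: add_eq_conv_ex)
qed

lemma msum_min: "length bs = length as \<Longrightarrow> \<forall>i<length as. bs!i = {#as!i#} \<Longrightarrow> sum_list bs = mset as"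
proof (induction as arbitrary: bs)
  case Nil then show ?case by simp
next
  case (Cons a as)
  then obtain b bs' where "bs = b # bs'" by (cases bs) auto
  moreover have "b = {#a#}" using Cons.prems(2)[rule_format, of 0] by (simp add: \<open>bs = b # bs'\<close>)
  moreover have "\<forall>i<length as. bs'!i = {#as!i#}"
  proof (intro allI impI)
    fix i assume "i < length as"
    then show "bs'!i = {#as!i#}" using Cons.prems(2)[rule_format, of "Suc i"] by (simp add: \<open>bs = b # bs'\<close>)
  qed
  moreover have "length bs' = length as" using Cons.prems(1) \<open>bs = b # bs'\<close> by simp
  ultimately show ?case using Cons.IH by simp
qed

lemma lcat_min: "length bs = length as \<Longrightarrow> \<forall>i<length as. bs!i = [as!i] \<Longrightarrow> concat bs = as"
proof (induction as arbitrary: bs)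
  case Nil then show ?case by simp
next
  case (Cons a as)
  then obtain b bs' where "bs = b # bs'" by (cases bs) auto
  moreover have "b = [a]" using Cons.prems(2)[rule_format, of 0] by (simp add: \<open>bs = b # bs'\<close>)
  moreover have "\<forall>i<length as. bs'!i = [as!i]"
  proof (intro allI impI)
    fix i assume "i < length as"
    then show "bs'!i = [as!i]" using Cons.prems(2)[rule_format, of "Suc i"] by (simp add: \<open>bs = b # bs'\<close>)
  qed
  moreover have "length bs' = length as" using Cons.prems(1) \<open>bs = b # bs'\<close> by simp
  ultimately show ?case using Cons.IH by simp
qed



lemma all_less1: "(\<forall>i<Suc 0. P i) \<longleftrightarrow> P 0" by auto
lemma all_less2: "(\<forall>i<2. P i) \<longleftrightarrow> P 0 \<and> P (Suc 0)" by (auto simp: less_2_cases_iff)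

lemma l_disc: "lbposet S (\<lambda>w x. x \<in> S \<and> w = [x])"
  unfolding lbposet_def
  apply (intro conjI)
  subgoal by auto
  subgoal by auto
  subgoal
  proof (intro allI impI)
  fix as a bs assume h: "a \<in> S \<and> as = [a]" "length bs = length as"
    "\<forall>i<length as. as ! i \<in> S \<and> bs ! i = [as ! i]"
  then have "concat bs = as" using lcat_min by blast
  with h show "a \<in> S \<and> concat bs = [a]" by simp
  qed
  subgoal by auto
  done

lemma m_disc: "mbposet S (\<lambda>w x. x \<in> S \<and> w = {#x#})"
  unfolding mbposet_def
  apply (intro conjI)
  subgoal by auto
  subgoal by auto
  subgoal
  proof (intro allI impI)
  fix as a bs assume h: "a \<in> S \<and> mset as = {#a#}" "length bs = length as"
    "\<forall>i<length as. as ! i \<in> S \<and> bs ! i = {#as ! i#}"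
  then have "sum_list bs = mset as" using msum_min by blast
  with h show "a \<in> S \<and> sum_list bs = {#a#}" by simp
  qed
  subgoal by auto
  done

lemma l_one: assumes "r\<in>S" "l1\<in>S" "l2\<in>S" "r\<noteq>l1" "r\<noteq>l2"
  shows "lbposet S (\<lambda>w x. (x\<in>S \<and> w=[x]) \<or> (x=r \<and> w=[l1,l2]))"
  unfolding lbposet_def
  apply (intro conjI)
  subgoal using assms by auto
  subgoal by auto
  subgoal
  proof (intro allI impI)
  fix as a bs
  let ?R = "\<lambda>w x. (x\<in>S \<and> w=[x]) \<or> (x=r \<and> w=[l1,l2])"
  assume h: "?R as a" "length bs = length as" "\<forall>i<length as. ?R (bs ! i) (as ! i)"
  show "?R (concat bs) a"
  proof (cases "a \<in> S \<and> as = [a]")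
    case True
    obtain b where bs: "bs = [b]" using h(2) True by (auto simp: length_Suc_conv)
    have "?R b a" using h(3)[rule_format, of 0] True bs by simp
    then show ?thesis using bs by simp
  next
    case False
    then have a: "a = r" "as = [l1,l2]" using h(1) by auto
    obtain b0 b1 where bs: "bs = [b0,b1]" using h(2) a by (auto simp: length_Suc_conv)
    have "?R b0 l1" using h(3)[rule_format, of 0] a bs by simp
    then have "b0 = [l1]" using assms by auto
    moreover have "?R b1 l2" using h(3)[rule_format, of 1] a bs by simp
    then have "b1 = [l2]" using assms by auto
    ultimately show ?thesis using a bs by simp
  qed
  qed
  subgoal using assms by auto
  done

lemma m_one: assumes "r\<in>S" "l1\<in>S" "l2\<in>S" "r\<noteq>l1" "r\<noteq>l2"
  shows "mbposet S (\<lambda>w x. (x\<in>S \<and> w={#x#}) \<or> (x=r \<and> w={#l1,l2#}))"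
  unfolding mbposet_def
  apply (intro conjI)
  subgoal using assms by auto
  subgoal by auto
  subgoal
  proof (intro allI impI)
  fix as a bs
  let ?R = "\<lambda>w x. (x\<in>S \<and> w={#x#}) \<or> (x=r \<and> w={#l1,l2#})"
  assume h: "?R (mset as) a" "length bs = length as" "\<forall>i<length as. ?R (bs ! i) (as ! i)"
  show "?R (sum_list bs) a"
  proof (cases "a \<in> S \<and> mset as = {#a#}")
    case True
    then have as: "as = [a]" using mset1 by blast
    obtain b where bs: "bs = [b]" using h(2) as by (auto simp: length_Suc_conv)
    have "?R b a" using h(3)[rule_format, of 0] as bs by simp
    then show ?thesis using bs by simp
  next
    case False
    then have a: "a = r" "mset as = {#l1,l2#}" using h(1) by auto
    have "\<forall>i<length as. bs!i = {#as!i#}"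
    proof (intro allI impI)
      fix i assume i: "i < length as"
      then have "as!i \<in> set as" by simp
      moreover have "set as = {l1,l2}" using a(2) by (auto dest!: arg_cong[of _ _ set_mset])
      ultimately have "as!i \<in> {l1,l2}" by simp
      then show "bs!i = {#as!i#}" using h(3) i assms by auto
    qed
    then have "sum_list bs = mset as"
      using h(2) by (intro msum_min)
    then show ?thesis using a by simp
  qed
  qed
  subgoal using assms by auto
  done


lemma gc: "graft_carrier = {(Root,False),(Leaf 1,False),(Leaf 2,False),(Root,True),(Leaf 2,True)}"
  by (simp add: graft_carrier_def)

lemma lg_leaf: "lgraft_rel w y \<Longrightarrow> y \<noteq> (Root,False) \<Longrightarrow> y \<noteq> (Root,True) \<Longrightarrow> w = [y]"
  unfolding lgraft_rel_def by auto
lemma mg_leaf: "mgraft_rel w y \<Longrightarrow> y \<noteq> (Root,False) \<Longrightarrow> y \<noteq> (Root,True) \<Longrightarrow> w = {#y#}"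
  unfolding mgraft_rel_def by auto

lemma l_graft: "lbposet graft_carrier lgraft_rel"
  unfolding lbposet_def
  apply (intro conjI)
  subgoal by (auto simp: lgraft_rel_def graft_carrier_def)
  subgoal by (auto simp: lgraft_rel_def)
  subgoal
  proof (intro allI impI)
  fix as a bs
  assume h: "lgraft_rel as a" "length bs = length as" "\<forall>i<length as. lgraft_rel (bs ! i) (as ! i)"
  show "lgraft_rel (concat bs) a"
  proof (cases "a \<in> graft_carrier \<and> as = [a]")
    case True
    obtain b where bs: "bs = [b]" using h(2) True by (auto simp: length_Suc_conv)
    have "lgraft_rel b a" using h(3)[rule_format, of 0] True bs by simp
    then show ?thesis using bs by simp
  next
    case False
    show ?thesis
    proof (cases "a = (Root,True) \<and> as = [(Root,False),(Leaf 2,True)]")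
      case True
      obtain b0 b1 where bs: "bs = [b0,b1]" using h(2) True by (auto simp: length_Suc_conv)
      have "lgraft_rel b1 (Leaf 2,True)" using h(3)[rule_format, of 1] True bs by simp
      then have b1: "b1 = [(Leaf 2,True)]" by (rule lg_leaf) simp_all
      have "lgraft_rel b0 (Root,False)" using h(3)[rule_format, of 0] True bs by simp
      then have b0: "b0 = [(Root,False)] \<or> b0 = [(Leaf 1,False),(Leaf 2,False)]"
        unfolding lgraft_rel_def by auto
      have c: "concat bs = b0 @ [(Leaf 2,True)]" using bs b1 by simp
      from b0 show ?thesis
        by (elim disjE) (simp_all add: c lgraft_rel_def True graft_carrier_def)
    next
      case F2: False
      then have hh: "as \<in> {[(Leaf 1,False),(Leaf 2,False)], [(Leaf 1,False),(Leaf 2,False),(Leaf 2,True)]}"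
        using h(1) False F2 unfolding lgraft_rel_def by (elim disjE) simp_all
      have "\<forall>i<length as. bs!i = [as!i]"
      proof (intro allI impI)
        fix i assume i: "i < length as"
        then have "as!i \<in> set as" by simp
        then have ne: "as!i \<noteq> (Root,False)" "as!i \<noteq> (Root,True)" using hh by auto
        have "lgraft_rel (bs!i) (as!i)" using h(3) i by blast
        then show "bs!i = [as!i]" using ne by (rule lg_leaf)
      qed
      then have "concat bs = as" using h(2) by (intro lcat_min)
      then show ?thesis using h(1) by simp
    qed
  qed
  qed
  subgoal by (auto simp: lgraft_rel_def)
  done

lemma m_graft: "mbposet graft_carrier mgraft_rel"
  unfolding mbposet_def
  apply (intro conjI)
  subgoal by (auto simp: mgraft_rel_def graft_carrier_def)
  subgoal by (auto simp: mgraft_rel_def)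
  subgoal
  proof (intro allI impI)
  fix as a bs
  assume h: "mgraft_rel (mset as) a" "length bs = length as" "\<forall>i<length as. mgraft_rel (bs ! i) (as ! i)"
  show "mgraft_rel (sum_list bs) a"
  proof (cases "a \<in> graft_carrier \<and> mset as = {#a#}")
    case True
    then have as: "as = [a]" using mset1 by blast
    obtain b where bs: "bs = [b]" using h(2) as by (auto simp: length_Suc_conv)
    have "mgraft_rel b a" using h(3)[rule_format, of 0] as bs by simp
    then show ?thesis using bs by simp
  next
    case False
    show ?thesis
    proof (cases "a = (Root,True) \<and> mset as = {#(Root,False),(Leaf 2,True)#}")
      case True
      then have as: "as = [(Root,False),(Leaf 2,True)] \<or> as = [(Leaf 2,True),(Root,False)]" using mset2[of as "(Root,False)" "(Leaf 2,True)"] by simp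
      have R: "\<And>b. mgraft_rel b (Root,False) \<Longrightarrow> b = {#(Root,False)#} \<or> b = {#(Leaf 1,False),(Leaf 2,False)#}"
        unfolding mgraft_rel_def by auto
      have L: "\<And>b. mgraft_rel b (Leaf 2,True) \<Longrightarrow> b = {#(Leaf 2,True)#}" by (erule mg_leaf) simp_all
      obtain b0 b1 where bs: "bs = [b0,b1]" using h(2) as by (auto simp: length_Suc_conv)
      have s: "sum_list bs = b0 + b1" using bs by simp
      have r0: "mgraft_rel b0 (as!0)" using h(3)[rule_format, of 0] as bs by auto
      have r1: "mgraft_rel b1 (as!1)" using h(3)[rule_format, of 1] as bs by auto
      have "b0 + b1 = {#(Root,False),(Leaf 2,True)#} \<or>
            b0 + b1 = {#(Leaf 1,False),(Leaf 2,False),(Leaf 2,True)#}"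
        using as
      proof (elim disjE)
        assume "as = [(Root, False), (Leaf 2, True)]"
        then have "mgraft_rel b0 (Root,False)" "mgraft_rel b1 (Leaf 2,True)" using r0 r1 by simp_all
        then have "b1 = {#(Leaf 2,True)#}" "b0 = {#(Root,False)#} \<or> b0 = {#(Leaf 1,False),(Leaf 2,False)#}"
          using R L by blast+
        then show ?thesis by auto
      next
        assume "as = [(Leaf 2, True), (Root, False)]"
        then have "mgraft_rel b1 (Root,False)" "mgraft_rel b0 (Leaf 2,True)" using r0 r1 by simp_all
        then have "b0 = {#(Leaf 2,True)#}" "b1 = {#(Root,False)#} \<or> b1 = {#(Leaf 1,False),(Leaf 2,False)#}"
          using R L by blast+
        then show ?thesis by auto
      qed
      then show ?thesis using True s by (auto simp: mgraft_rel_def graft_carrier_def)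
    next
      case F2: False
      then have hh: "mset as \<in> {{#(Leaf 1,False),(Leaf 2,False)#}, {#(Leaf 1,False),(Leaf 2,False),(Leaf 2,True)#}}"
        using h(1) False F2 unfolding mgraft_rel_def by (elim disjE) simp_all
      have "\<forall>i<length as. bs!i = {#as!i#}"
      proof (intro allI impI)
        fix i assume i: "i < length as"
        then have "as!i \<in> set as" by simp
        moreover have "set as \<subseteq> {(Leaf 1,False),(Leaf 2,False),(Leaf 2,True)}"
          using hh by (auto dest!: arg_cong[of _ _ set_mset])
        ultimately have ne: "as!i \<noteq> (Root,False)" "as!i \<noteq> (Root,True)" by auto
        have "mgraft_rel (bs!i) (as!i)" using h(3) i by blast
        then show "bs!i = {#as!i#}" using ne by (rule mg_leaf)
      qed
      then have "sum_list bs = mset as" using h(2) by (intro msum_min)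
      then show ?thesis using h(1) by simp
    qed
  qed
  qed
  subgoal by (auto simp: mgraft_rel_def)
  done





lemma l_prodpos: assumes A: "lbposet A RA" and B: "lbposet B RB"
  shows "lbposet (A \<times> B) (lprod_rel RA RB)"
proof -
  from A have A1: "\<And>w a. RA w a \<Longrightarrow> set w \<subseteq> A \<and> a \<in> A" and A2: "\<And>a. a\<in>A \<Longrightarrow> RA [a] a"
    and A3: "\<And>as a bs. RA as a \<Longrightarrow> length bs = length as \<Longrightarrow> (\<forall>i<length as. RA (bs ! i) (as ! i)) \<Longrightarrow> RA (concat bs) a"
    and A4: "\<And>a b. a\<in>A \<Longrightarrow> b\<in>A \<Longrightarrow> RA [a] b \<Longrightarrow> RA [b] a \<Longrightarrow> a = b"
    unfolding lbposet_def by blast+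
  from B have B1: "\<And>w a. RB w a \<Longrightarrow> set w \<subseteq> B \<and> a \<in> B" and B2: "\<And>a. a\<in>B \<Longrightarrow> RB [a] a"
    and B3: "\<And>as a bs. RB as a \<Longrightarrow> length bs = length as \<Longrightarrow> (\<forall>i<length as. RB (bs ! i) (as ! i)) \<Longrightarrow> RB (concat bs) a"
    and B4: "\<And>a b. a\<in>B \<Longrightarrow> b\<in>B \<Longrightarrow> RB [a] b \<Longrightarrow> RB [b] a \<Longrightarrow> a = b"
    unfolding lbposet_def by blast+
  show ?thesis
    unfolding lbposet_def
  proof (intro conjI allI impI ballI)
    fix w a assume "lprod_rel RA RB w a"
    then show "set w \<subseteq> A \<times> B" using A1 B1 unfolding lprod_rel_def by fastforce
  next
    fix w a assume "lprod_rel RA RB w a"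
    then show "a \<in> A \<times> B" using A1 B1 unfolding lprod_rel_def mem_Times_iff by blast
  next
    fix a assume "a \<in> A \<times> B" then show "lprod_rel RA RB [a] a" using A2 B2 unfolding lprod_rel_def by auto
  next
    fix as a bs assume h: "lprod_rel RA RB as a" "length bs = length as"
      "\<forall>i<length as. lprod_rel RA RB (bs ! i) (as ! i)"
    have "RA (concat (map (map fst) bs)) (fst a)"
      using h by (intro A3[of "map fst as"]) (auto simp: lprod_rel_def)
    moreover have "RB (concat (map (map snd) bs)) (snd a)"
      using h by (intro B3[of "map snd as"]) (auto simp: lprod_rel_def)
    ultimately show "lprod_rel RA RB (concat bs) a" by (simp add: lprod_rel_def map_concat)
  next
    fix a b assume "a \<in> A \<times> B" "b \<in> A \<times> B" "lprod_rel RA RB [a] b" "lprod_rel RA RB [b] a"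
    then show "a = b" using A4 B4 unfolding lprod_rel_def by (auto intro: prod_eqI)
  qed
qed

lemma m_prodpos: assumes A: "mbposet A RA" and B: "mbposet B RB"
  shows "mbposet (A \<times> B) (mprod_rel RA RB)"
proof -
  from A have A1: "\<And>w a. RA w a \<Longrightarrow> set_mset w \<subseteq> A \<and> a \<in> A" and A2: "\<And>a. a\<in>A \<Longrightarrow> RA {#a#} a"
    and A3: "\<And>as a bs. RA (mset as) a \<Longrightarrow> length bs = length as \<Longrightarrow> (\<forall>i<length as. RA (bs ! i) (as ! i)) \<Longrightarrow> RA (sum_list bs) a"
    and A4: "\<And>a b. a\<in>A \<Longrightarrow> b\<in>A \<Longrightarrow> RA {#a#} b \<Longrightarrow> RA {#b#} a \<Longrightarrow> a = b"
    unfolding mbposet_def by blast+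
  from B have B1: "\<And>w a. RB w a \<Longrightarrow> set_mset w \<subseteq> B \<and> a \<in> B" and B2: "\<And>a. a\<in>B \<Longrightarrow> RB {#a#} a"
    and B3: "\<And>as a bs. RB (mset as) a \<Longrightarrow> length bs = length as \<Longrightarrow> (\<forall>i<length as. RB (bs ! i) (as ! i)) \<Longrightarrow> RB (sum_list bs) a"
    and B4: "\<And>a b. a\<in>B \<Longrightarrow> b\<in>B \<Longrightarrow> RB {#a#} b \<Longrightarrow> RB {#b#} a \<Longrightarrow> a = b"
    unfolding mbposet_def by blast+
  show ?thesis
    unfolding mbposet_def
  proof (intro conjI allI impI ballI)
    fix w a assume "mprod_rel RA RB w a"
    then show "set_mset w \<subseteq> A \<times> B" using A1 B1 unfolding mprod_rel_def by fastforce
  next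
    fix w a assume "mprod_rel RA RB w a"
    then show "a \<in> A \<times> B" using A1 B1 unfolding mprod_rel_def mem_Times_iff by blast
  next
    fix a assume "a \<in> A \<times> B" then show "mprod_rel RA RB {#a#} a" using A2 B2 unfolding mprod_rel_def by auto
  next
    fix as a bs assume h: "mprod_rel RA RB (mset as) a" "length bs = length as"
      "\<forall>i<length as. mprod_rel RA RB (bs ! i) (as ! i)"
    have "RA (sum_list (map (image_mset fst) bs)) (fst a)"
      using h by (intro A3[of "map fst as"]) (auto simp: mprod_rel_def)
    moreover have "RB (sum_list (map (image_mset snd) bs)) (snd a)"
      using h by (intro B3[of "map snd as"]) (auto simp: mprod_rel_def)
    moreover have im: "image_mset f (sum_list bs) = sum_list (map (image_mset f) bs)" for f :: "'a \<times> 'b \<Rightarrow> 'c"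
      by (induction bs) auto
    ultimately show "mprod_rel RA RB (sum_list bs) a" by (simp add: mprod_rel_def im)
  next
    fix a b assume "a \<in> A \<times> B" "b \<in> A \<times> B" "mprod_rel RA RB {#a#} b" "mprod_rel RA RB {#b#} a"
    then show "a = b" using A4 B4 unfolding mprod_rel_def by (auto intro: prod_eqI)
  qed
qed

lemma l_prod: assumes A: "lbposet A RA" and B: "lbposet B RB"
  shows "lis_product TYPE('c) A RA B RB (A \<times> B) (lprod_rel RA RB) fst snd"
  unfolding lis_product_def
proof (intro conjI allI impI)
  show "lbposet (A \<times> B) (lprod_rel RA RB)" using l_prodpos[OF A B] .
  show "lmono (A \<times> B) (lprod_rel RA RB) A RA fst" unfolding lmono_def lprod_rel_def by auto
  show "lmono (A \<times> B) (lprod_rel RA RB) B RB snd" unfolding lmono_def lprod_rel_def by auto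
  fix C :: "'c set" and RC f g
  assume h: "lbposet C RC \<and> lmono C RC A RA f \<and> lmono C RC B RB g"
  show "\<exists>h. lmono C RC (A \<times> B) (lprod_rel RA RB) h \<and> (\<forall>x\<in>C. fst (h x) = f x \<and> snd (h x) = g x) \<and>
           (\<forall>h'. lmono C RC (A \<times> B) (lprod_rel RA RB) h' \<and> (\<forall>x\<in>C. fst (h' x) = f x \<and> snd (h' x) = g x)
                 \<longrightarrow> (\<forall>x\<in>C. h' x = h x))"
    apply (rule exI[of _ "\<lambda>x. (f x, g x)"])
    using h by (auto simp: lmono_def lprod_rel_def comp_def intro: prod_eqI)
qed

lemma m_prod: assumes A: "mbposet A RA" and B: "mbposet B RB"
  shows "mis_product TYPE('c) A RA B RB (A \<times> B) (mprod_rel RA RB) fst snd"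
  unfolding mis_product_def
proof (intro conjI allI impI)
  show "mbposet (A \<times> B) (mprod_rel RA RB)" using m_prodpos[OF A B] .
  show "mmono (A \<times> B) (mprod_rel RA RB) A RA fst" unfolding mmono_def mprod_rel_def by auto
  show "mmono (A \<times> B) (mprod_rel RA RB) B RB snd" unfolding mmono_def mprod_rel_def by auto
  fix C :: "'c set" and RC f g
  assume h: "mbposet C RC \<and> mmono C RC A RA f \<and> mmono C RC B RB g"
  show "\<exists>h. mmono C RC (A \<times> B) (mprod_rel RA RB) h \<and> (\<forall>x\<in>C. fst (h x) = f x \<and> snd (h x) = g x) \<and>
           (\<forall>h'. mmono C RC (A \<times> B) (mprod_rel RA RB) h' \<and> (\<forall>x\<in>C. fst (h' x) = f x \<and> snd (h' x) = g x)
                 \<longrightarrow> (\<forall>x\<in>C. h' x = h x))"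
    apply (rule exI[of _ "\<lambda>x. (f x, g x)"])
    using h by (auto simp: mmono_def mprod_rel_def image_mset.compositionality comp_def intro: prod_eqI)
qed

lemma l_term: "lis_terminal TYPE('c) (UNIV::unit set) (\<lambda>_ _. True)"
  unfolding lis_terminal_def lbposet_def lmono_def by auto
lemma m_term: "mis_terminal TYPE('c) (UNIV::unit set) (\<lambda>_ _. True)"
  unfolding mis_terminal_def mbposet_def mmono_def by auto



lemma lstar_eq: "lstar_rel = (\<lambda>w x. x \<in> UNIV \<and> w = [x])" by (auto simp: lstar_rel_def fun_eq_iff)
lemma mstar_eq: "mstar_rel = (\<lambda>w x. x \<in> UNIV \<and> w = {#x#})" by (auto simp: mstar_rel_def fun_eq_iff)
lemma lc2_eq: "lcorolla_rel 2 = (\<lambda>w x. (x \<in> corolla_carrier 2 \<and> w=[x]) \<or> (x=Root \<and> w=[Leaf 1, Leaf 2]))"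
  by (auto simp: lc2 cc2 fun_eq_iff)
lemma mc2_eq: "mcorolla_rel 2 = (\<lambda>w x. (x \<in> corolla_carrier 2 \<and> w={#x#}) \<or> (x=Root \<and> w={#Leaf 1, Leaf 2#}))"
  by (auto simp: mc2 cc2 fun_eq_iff)

lemma l_c2: "lbposet (corolla_carrier 2) (lcorolla_rel 2)"
  unfolding lc2_eq by (rule l_one) (auto simp: cc2)
lemma m_c2: "mbposet (corolla_carrier 2) (mcorolla_rel 2)"
  unfolding mc2_eq by (rule m_one) (auto simp: cc2)

lemma l_push: "lis_pushout TYPE('q) (UNIV::unit set) lstar_rel
      (corolla_carrier 2) (lcorolla_rel 2) (corolla_carrier 2) (lcorolla_rel 2)
      pickR pickL1 graft_carrier lgraft_rel graft_in1 graft_in2"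
  unfolding lis_pushout_def
proof (intro conjI allI impI)
  show "lbposet UNIV lstar_rel" unfolding lstar_eq by (rule l_disc)
  show "lbposet (corolla_carrier 2) (lcorolla_rel 2)" by (rule l_c2)
  show "lbposet (corolla_carrier 2) (lcorolla_rel 2)" by (rule l_c2)
  show "lbposet graft_carrier lgraft_rel" by (rule l_graft)
  show "lmono UNIV lstar_rel (corolla_carrier 2) (lcorolla_rel 2) pickR"
    by (auto simp: lmono_def lstar_rel_def pickR_def lc2 cc2)
  show "lmono UNIV lstar_rel (corolla_carrier 2) (lcorolla_rel 2) pickL1"
    by (auto simp: lmono_def lstar_rel_def pickL1_def lc2 cc2)
  show "lmono (corolla_carrier 2) (lcorolla_rel 2) graft_carrier lgraft_rel graft_in1"
    by (auto simp: lmono_def lgraft_rel_def graft_in1_def lc2 cc2 graft_carrier_def)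
  show "lmono (corolla_carrier 2) (lcorolla_rel 2) graft_carrier lgraft_rel graft_in2"
    by (auto simp: lmono_def lgraft_rel_def graft_in2_def lc2 cc2 graft_carrier_def)
  show "\<forall>x\<in>UNIV. graft_in1 (pickR x) = graft_in2 (pickL1 x)"
    by (simp add: graft_in1_def graft_in2_def pickR_def pickL1_def)
  fix Q :: "'q set" and RQ j1 j2
  assume h: "lbposet Q RQ \<and> lmono (corolla_carrier 2) (lcorolla_rel 2) Q RQ j1 \<and>
      lmono (corolla_carrier 2) (lcorolla_rel 2) Q RQ j2 \<and> (\<forall>x\<in>UNIV. j1 (pickR x) = j2 (pickL1 x))"
  then have Q2: "\<And>a. a\<in>Q \<Longrightarrow> RQ [a] a"
    and Q3: "\<And>as a bs. RQ as a \<Longrightarrow> length bs = length as \<Longrightarrow> (\<forall>i<length as. RQ (bs ! i) (as ! i)) \<Longrightarrow> RQ (concat bs) a"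
    unfolding lbposet_def by blast+
  from h have j1: "\<And>x. x \<in> corolla_carrier 2 \<Longrightarrow> j1 x \<in> Q" "RQ [j1 (Leaf 1), j1 (Leaf 2)] (j1 Root)"
    unfolding lmono_def by (auto simp: lc2 cc2)
  from h have j2: "\<And>x. x \<in> corolla_carrier 2 \<Longrightarrow> j2 x \<in> Q" "RQ [j2 (Leaf 1), j2 (Leaf 2)] (j2 Root)"
    unfolding lmono_def by (auto simp: lc2 cc2)
  from h have e: "j1 Root = j2 (Leaf 1)" by (simp add: pickR_def pickL1_def)
  define u where "u p = (if snd p then j2 (fst p) else j1 (fst p))" for p
  have jQ: "j1 Root \<in> Q" "j1 (Leaf 1) \<in> Q" "j1 (Leaf 2) \<in> Q" "j2 Root \<in> Q" "j2 (Leaf 2) \<in> Q"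
    by (rule j1(1) j2(1); simp add: cc2)+
  have uQ: "\<And>p. p \<in> graft_carrier \<Longrightarrow> u p \<in> Q" using jQ by (auto simp: u_def graft_carrier_def)
  have r3: "RQ [j1 (Leaf 1), j1 (Leaf 2), j2 (Leaf 2)] (j2 Root)"
  proof -
    have "RQ (concat [[j1 (Leaf 1), j1 (Leaf 2)], [j2 (Leaf 2)]]) (j2 Root)"
      apply (rule Q3[of "[j1 Root, j2 (Leaf 2)]"])
      using j2(2) e j1(2) Q2 j2(1) by (auto simp: less_Suc_eq nth_Cons' cc2)
    then show ?thesis by simp
  qed
  have um: "lmono graft_carrier lgraft_rel Q RQ u"
    unfolding lmono_def
  proof (intro conjI allI impI ballI)
    fix a assume "a \<in> graft_carrier" then show "u a \<in> Q" by (rule uQ)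
  next
    fix w a assume H: "lgraft_rel w a"
    show "RQ (map u w) (u a)"
      using H unfolding lgraft_rel_def
    proof (elim disjE conjE)
      assume "a \<in> graft_carrier" "w = [a]"
      then show ?thesis using Q2 uQ by simp
    qed (use j1(2) j2(2) e r3 in \<open>simp_all add: u_def\<close>)
  qed
  have uniq: "\<forall>p\<in>graft_carrier. u' p = u p"
    if "\<forall>y\<in>corolla_carrier 2. u' (graft_in1 y) = j1 y" "\<forall>z\<in>corolla_carrier 2. u' (graft_in2 z) = j2 z" for u'
  proof
    fix p assume "p \<in> graft_carrier"
    then have "p = graft_in1 Root \<or> p = graft_in1 (Leaf 1) \<or> p = graft_in1 (Leaf 2) \<or> p = graft_in2 Root \<or> p = graft_in2 (Leaf 2)"
      by (auto simp: graft_carrier_def graft_in1_def graft_in2_def)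
    moreover have "u' (graft_in1 y) = u (graft_in1 y)" if "y \<in> corolla_carrier 2" for y
      using that \<open>\<forall>y\<in>corolla_carrier 2. u' (graft_in1 y) = j1 y\<close> by (simp add: u_def graft_in1_def)
    moreover have "u' (graft_in2 z) = u (graft_in2 z)" if "z \<in> corolla_carrier 2" "z \<noteq> Leaf 1" for z
    proof -
      have "u' (graft_in2 z) = j2 z" using that(1) \<open>\<forall>z\<in>corolla_carrier 2. u' (graft_in2 z) = j2 z\<close> by blast
      then show ?thesis using that(2) by (simp add: u_def graft_in2_def)
    qed
    ultimately show "u' p = u p" by (elim disjE) (simp_all add: cc2)
  qed
  have c1: "\<forall>y\<in>corolla_carrier 2. u (graft_in1 y) = j1 y" by (simp add: u_def graft_in1_def)
  have c2: "\<forall>z\<in>corolla_carrier 2. u (graft_in2 z) = j2 z" using e by (simp add: u_def graft_in2_def)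
  show "\<exists>u. lmono graft_carrier lgraft_rel Q RQ u \<and> (\<forall>y\<in>corolla_carrier 2. u (graft_in1 y) = j1 y) \<and>
           (\<forall>z\<in>corolla_carrier 2. u (graft_in2 z) = j2 z) \<and>
           (\<forall>u'. lmono graft_carrier lgraft_rel Q RQ u' \<and> (\<forall>y\<in>corolla_carrier 2. u' (graft_in1 y) = j1 y) \<and>
                 (\<forall>z\<in>corolla_carrier 2. u' (graft_in2 z) = j2 z) \<longrightarrow> (\<forall>p\<in>graft_carrier. u' p = u p))"
    using um c1 c2 uniq by blast
qed

lemma m_push: "mis_pushout TYPE('q) (UNIV::unit set) mstar_rel
      (corolla_carrier 2) (mcorolla_rel 2) (corolla_carrier 2) (mcorolla_rel 2)
      pickR pickL1 graft_carrier mgraft_rel graft_in1 graft_in2"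
  unfolding mis_pushout_def
proof (intro conjI allI impI)
  show "mbposet UNIV mstar_rel" unfolding mstar_eq by (rule m_disc)
  show "mbposet (corolla_carrier 2) (mcorolla_rel 2)" by (rule m_c2)
  show "mbposet (corolla_carrier 2) (mcorolla_rel 2)" by (rule m_c2)
  show "mbposet graft_carrier mgraft_rel" by (rule m_graft)
  show "mmono UNIV mstar_rel (corolla_carrier 2) (mcorolla_rel 2) pickR"
    by (auto simp: mmono_def mstar_rel_def pickR_def mc2 cc2)
  show "mmono UNIV mstar_rel (corolla_carrier 2) (mcorolla_rel 2) pickL1"
    by (auto simp: mmono_def mstar_rel_def pickL1_def mc2 cc2)
  show "mmono (corolla_carrier 2) (mcorolla_rel 2) graft_carrier mgraft_rel graft_in1"
    by (auto simp: mmono_def mgraft_rel_def graft_in1_def mc2 cc2 graft_carrier_def)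
  show "mmono (corolla_carrier 2) (mcorolla_rel 2) graft_carrier mgraft_rel graft_in2"
    by (auto simp: mmono_def mgraft_rel_def graft_in2_def mc2 cc2 graft_carrier_def)
  show "\<forall>x\<in>UNIV. graft_in1 (pickR x) = graft_in2 (pickL1 x)"
    by (simp add: graft_in1_def graft_in2_def pickR_def pickL1_def)
  fix Q :: "'q set" and RQ j1 j2
  assume h: "mbposet Q RQ \<and> mmono (corolla_carrier 2) (mcorolla_rel 2) Q RQ j1 \<and>
      mmono (corolla_carrier 2) (mcorolla_rel 2) Q RQ j2 \<and> (\<forall>x\<in>UNIV. j1 (pickR x) = j2 (pickL1 x))"
  then have Q2: "\<And>a. a\<in>Q \<Longrightarrow> RQ {#a#} a"
    and Q3: "\<And>as a bs. RQ (mset as) a \<Longrightarrow> length bs = length as \<Longrightarrow> (\<forall>i<length as. RQ (bs ! i) (as ! i)) \<Longrightarrow> RQ (sum_list bs) a"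
    unfolding mbposet_def by blast+
  from h have j1: "\<And>x. x \<in> corolla_carrier 2 \<Longrightarrow> j1 x \<in> Q" "RQ {#j1 (Leaf 1), j1 (Leaf 2)#} (j1 Root)"
    unfolding mmono_def by (auto simp: mc2 cc2)
  from h have j2: "\<And>x. x \<in> corolla_carrier 2 \<Longrightarrow> j2 x \<in> Q" "RQ {#j2 (Leaf 1), j2 (Leaf 2)#} (j2 Root)"
    unfolding mmono_def by (auto simp: mc2 cc2)
  from h have e: "j1 Root = j2 (Leaf 1)" by (simp add: pickR_def pickL1_def)
  define u where "u p = (if snd p then j2 (fst p) else j1 (fst p))" for p
  have jQ: "j1 Root \<in> Q" "j1 (Leaf 1) \<in> Q" "j1 (Leaf 2) \<in> Q" "j2 Root \<in> Q" "j2 (Leaf 2) \<in> Q"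
    by (rule j1(1) j2(1); simp add: cc2)+
  have uQ: "\<And>p. p \<in> graft_carrier \<Longrightarrow> u p \<in> Q" using jQ by (auto simp: u_def graft_carrier_def)
  have r3: "RQ {#j1 (Leaf 1), j1 (Leaf 2), j2 (Leaf 2)#} (j2 Root)"
  proof -
    have "RQ (sum_list [{#j1 (Leaf 1), j1 (Leaf 2)#}, {#j2 (Leaf 2)#}]) (j2 Root)"
      apply (rule Q3[of "[j1 Root, j2 (Leaf 2)]"])
      using j2(2) e j1(2) Q2 j2(1) by (auto simp: less_Suc_eq nth_Cons' cc2)
    then show ?thesis by (simp add: add_mset_commute)
  qed
  have um: "mmono graft_carrier mgraft_rel Q RQ u"
    unfolding mmono_def
  proof (intro conjI allI impI ballI)
    fix a assume "a \<in> graft_carrier" then show "u a \<in> Q" by (rule uQ)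
  next
    fix w a assume H: "mgraft_rel w a"
    show "RQ (image_mset u w) (u a)"
      using H unfolding mgraft_rel_def
    proof (elim disjE conjE)
      assume "a \<in> graft_carrier" "w = {#a#}"
      then show ?thesis using Q2 uQ by simp
    qed (use j1(2) j2(2) e r3 in \<open>simp_all add: u_def\<close>)
  qed
  have uniq: "\<forall>p\<in>graft_carrier. u' p = u p"
    if "\<forall>y\<in>corolla_carrier 2. u' (graft_in1 y) = j1 y" "\<forall>z\<in>corolla_carrier 2. u' (graft_in2 z) = j2 z" for u'
  proof
    fix p assume "p \<in> graft_carrier"
    then have "p = graft_in1 Root \<or> p = graft_in1 (Leaf 1) \<or> p = graft_in1 (Leaf 2) \<or> p = graft_in2 Root \<or> p = graft_in2 (Leaf 2)"
      by (auto simp: graft_carrier_def graft_in1_def graft_in2_def)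
    moreover have "u' (graft_in1 y) = u (graft_in1 y)" if "y \<in> corolla_carrier 2" for y
      using that \<open>\<forall>y\<in>corolla_carrier 2. u' (graft_in1 y) = j1 y\<close> by (simp add: u_def graft_in1_def)
    moreover have "u' (graft_in2 z) = u (graft_in2 z)" if "z \<in> corolla_carrier 2" "z \<noteq> Leaf 1" for z
    proof -
      have "u' (graft_in2 z) = j2 z" using that(1) \<open>\<forall>z\<in>corolla_carrier 2. u' (graft_in2 z) = j2 z\<close> by blast
      then show ?thesis using that(2) by (simp add: u_def graft_in2_def)
    qed
    ultimately show "u' p = u p" by (elim disjE) (simp_all add: cc2)
  qed
  have c1: "\<forall>y\<in>corolla_carrier 2. u (graft_in1 y) = j1 y" by (simp add: u_def graft_in1_def)
  have c2: "\<forall>z\<in>corolla_carrier 2. u (graft_in2 z) = j2 z" using e by (simp add: u_def graft_in2_def)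
  show "\<exists>u. mmono graft_carrier mgraft_rel Q RQ u \<and> (\<forall>y\<in>corolla_carrier 2. u (graft_in1 y) = j1 y) \<and>
           (\<forall>z\<in>corolla_carrier 2. u (graft_in2 z) = j2 z) \<and>
           (\<forall>u'. mmono graft_carrier mgraft_rel Q RQ u' \<and> (\<forall>y\<in>corolla_carrier 2. u' (graft_in1 y) = j1 y) \<and>
                 (\<forall>z\<in>corolla_carrier 2. u' (graft_in2 z) = j2 z) \<longrightarrow> (\<forall>p\<in>graft_carrier. u' p = u p))"
    using um c1 c2 uniq by blast
qed



lemma lp3: "lprod_rel (lcorolla_rel 3) (\<lambda>w x. (x\<in>S \<and> w=[x]) \<or> (x=r \<and> w=[l1,l2])) w a \<Longrightarrow> w = [a] \<and> a \<in> corolla_carrier 3 \<times> S"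
  unfolding lprod_rel_def lc3 cc3
  by (cases w) (auto simp: mem_Times_iff intro: prod_eqI)
lemma lp3d: "lprod_rel (lcorolla_rel 3) (\<lambda>w x. x\<in>S \<and> w=[x]) w a \<Longrightarrow> w = [a] \<and> a \<in> corolla_carrier 3 \<times> S"
  unfolding lprod_rel_def lc3 cc3
  by (cases w) (auto simp: mem_Times_iff intro: prod_eqI)
lemma mp3_gen: assumes "mprod_rel (mcorolla_rel 3) R w a"
  and R: "\<And>v x. R v x \<Longrightarrow> v = {#x#} \<and> x \<in> S \<or> size v = 2"
  shows "w = {#a#} \<and> a \<in> corolla_carrier 3 \<times> S"
proof -
  have A: "mcorolla_rel 3 (image_mset fst w) (fst a)" and B: "R (image_mset snd w) (snd a)"
    using assms(1) unfolding mprod_rel_def by auto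
  have sA: "image_mset fst w = {#fst a#} \<and> fst a \<in> corolla_carrier 3 \<or> size w = 3"
    using A unfolding mc3 cc3 by (auto dest: arg_cong[of _ _ size])
  have sB: "image_mset snd w = {#snd a#} \<and> snd a \<in> S \<or> size w = 2"
    using R[OF B] by (auto dest: arg_cong[of _ _ size])
  have f: "image_mset fst w = {#fst a#}" and fa: "fst a \<in> corolla_carrier 3"
    and g: "image_mset snd w = {#snd a#}" and sa: "snd a \<in> S"
    using sA sB by (auto dest: arg_cong[of _ _ size])
  have "size w = 1" using arg_cong[OF f, of size] by simp
  then obtain y where y: "w = {#y#}" using size_1_singleton_mset by blast
  then have "y = a" using f g by (simp add: prod_eq_iff)
  then show ?thesis using y fa sa by (simp add: mem_Times_iff)
qed

lemma mp3: "mprod_rel (mcorolla_rel 3) (\<lambda>w x. (x\<in>S \<and> w={#x#}) \<or> (x=r \<and> w={#l1,l2#})) w a \<Longrightarrow> w = {#a#} \<and> a \<in> corolla_carrier 3 \<times> S"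
  by (erule mp3_gen) auto
lemma mp3d: "mprod_rel (mcorolla_rel 3) (\<lambda>w x. x\<in>S \<and> w={#x#}) w a \<Longrightarrow> w = {#a#} \<and> a \<in> corolla_carrier 3 \<times> S"
  by (erule mp3_gen) auto

lemma lgraft3: "lgraft_rel [(Leaf 1,False),(Leaf 2,False),(Leaf 2,True)] (Root,True)"
  by (simp add: lgraft_rel_def)
lemma mgraft3: "mgraft_rel {#(Leaf 1,False),(Leaf 2,False),(Leaf 2,True)#} (Root,True)"
  by (simp add: mgraft_rel_def)
lemma lc3r: "lcorolla_rel 3 [Leaf 1, Leaf 2, Leaf 3] Root" by (simp add: lc3)
lemma mc3r: "mcorolla_rel 3 {#Leaf 1, Leaf 2, Leaf 3#} Root" by (simp add: mc3)

lemma l_notpush: "\<not> lis_pushout TYPE(cnode \<times> cnode \<times> bool)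
      (corolla_carrier 3 \<times> (UNIV::unit set)) (lprod_rel (lcorolla_rel 3) lstar_rel)
      (corolla_carrier 3 \<times> corolla_carrier 2) (lprod_rel (lcorolla_rel 3) (lcorolla_rel 2))
      (corolla_carrier 3 \<times> corolla_carrier 2) (lprod_rel (lcorolla_rel 3) (lcorolla_rel 2))
      (map_prod id pickR) (map_prod id pickL1)
      (corolla_carrier 3 \<times> graft_carrier) (lprod_rel (lcorolla_rel 3) lgraft_rel)
      (map_prod id graft_in1) (map_prod id graft_in2)"
  (is "\<not> lis_pushout _ ?X0 ?R0 ?X1 ?R1 ?X2 ?R2 ?f1 ?f2 ?P ?RP ?i1 ?i2")
proof
  assume H: "lis_pushout TYPE(cnode \<times> cnode \<times> bool) ?X0 ?R0 ?X1 ?R1 ?X2 ?R2 ?f1 ?f2 ?P ?RP ?i1 ?i2"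
  define Q where "Q = corolla_carrier 3 \<times> graft_carrier"
  define RQ where "RQ = (\<lambda>w (x::cnode \<times> cnode \<times> bool). x \<in> Q \<and> w = [x])"
  have Qp: "lbposet Q RQ" unfolding RQ_def by (rule l_disc)
  have m1: "lmono ?X1 ?R1 Q RQ ?i1"
    unfolding lmono_def
  proof (intro conjI allI impI ballI)
    fix a assume "a \<in> ?X1" then show "?i1 a \<in> Q"
      by (auto simp: Q_def cc2 graft_in1_def graft_carrier_def)
  next
    fix w a assume "?R1 w a"
    then have "w = [a] \<and> a \<in> ?X1" unfolding lc2_eq by (rule lp3)
    then show "RQ (map ?i1 w) (?i1 a)" by (auto simp: RQ_def Q_def cc2 graft_in1_def graft_carrier_def)
  qed
  have m2: "lmono ?X2 ?R2 Q RQ ?i2"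
    unfolding lmono_def
  proof (intro conjI allI impI ballI)
    fix a assume "a \<in> ?X2" then show "?i2 a \<in> Q"
      by (auto simp: Q_def cc2 graft_in2_def graft_carrier_def)
  next
    fix w a assume "?R2 w a"
    then have "w = [a] \<and> a \<in> ?X2" unfolding lc2_eq by (rule lp3)
    then show "RQ (map ?i2 w) (?i2 a)" by (auto simp: RQ_def Q_def cc2 graft_in2_def graft_carrier_def)
  qed
  have cm: "\<forall>x\<in>?X0. ?i1 (?f1 x) = ?i2 (?f2 x)"
    by (auto simp: graft_in1_def graft_in2_def pickR_def pickL1_def)
  from H Qp m1 m2 cm obtain u where um: "lmono ?P ?RP Q RQ u"
    unfolding lis_pushout_def by blast
  have "?RP [(Leaf 1,(Leaf 1,False)),(Leaf 2,(Leaf 2,False)),(Leaf 3,(Leaf 2,True))] (Root,(Root,True))"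
    using lgraft3 lc3r by (simp add: lprod_rel_def)
  then have "RQ (map u [(Leaf 1,(Leaf 1,False)),(Leaf 2,(Leaf 2,False)),(Leaf 3,(Leaf 2,True))]) (u (Root,(Root,True)))"
    using um unfolding lmono_def by blast
  then show False by (simp add: RQ_def)
qed


lemma m_notpush: "\<not> mis_pushout TYPE(cnode \<times> cnode \<times> bool)
      (corolla_carrier 3 \<times> (UNIV::unit set)) (mprod_rel (mcorolla_rel 3) mstar_rel)
      (corolla_carrier 3 \<times> corolla_carrier 2) (mprod_rel (mcorolla_rel 3) (mcorolla_rel 2))
      (corolla_carrier 3 \<times> corolla_carrier 2) (mprod_rel (mcorolla_rel 3) (mcorolla_rel 2))
      (map_prod id pickR) (map_prod id pickL1)
      (corolla_carrier 3 \<times> graft_carrier) (mprod_rel (mcorolla_rel 3) mgraft_rel)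
      (map_prod id graft_in1) (map_prod id graft_in2)"
  (is "\<not> mis_pushout _ ?X0 ?R0 ?X1 ?R1 ?X2 ?R2 ?f1 ?f2 ?P ?RP ?i1 ?i2")
proof
  assume H: "mis_pushout TYPE(cnode \<times> cnode \<times> bool) ?X0 ?R0 ?X1 ?R1 ?X2 ?R2 ?f1 ?f2 ?P ?RP ?i1 ?i2"
  define Q where "Q = corolla_carrier 3 \<times> graft_carrier"
  define RQ where "RQ = (\<lambda>w (x::cnode \<times> cnode \<times> bool). x \<in> Q \<and> w = {#x#})"
  have Qp: "mbposet Q RQ" unfolding RQ_def by (rule m_disc)
  have m1: "mmono ?X1 ?R1 Q RQ ?i1"
    unfolding mmono_def
  proof (intro conjI allI impI ballI)
    fix a assume "a \<in> ?X1" then show "?i1 a \<in> Q"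
      by (auto simp: Q_def cc2 graft_in1_def graft_carrier_def)
  next
    fix w a assume "?R1 w a"
    then have "w = {#a#} \<and> a \<in> ?X1" unfolding mc2_eq by (rule mp3)
    then show "RQ (image_mset ?i1 w) (?i1 a)" by (auto simp: RQ_def Q_def cc2 graft_in1_def graft_carrier_def)
  qed
  have m2: "mmono ?X2 ?R2 Q RQ ?i2"
    unfolding mmono_def
  proof (intro conjI allI impI ballI)
    fix a assume "a \<in> ?X2" then show "?i2 a \<in> Q"
      by (auto simp: Q_def cc2 graft_in2_def graft_carrier_def)
  next
    fix w a assume "?R2 w a"
    then have "w = {#a#} \<and> a \<in> ?X2" unfolding mc2_eq by (rule mp3)
    then show "RQ (image_mset ?i2 w) (?i2 a)" by (auto simp: RQ_def Q_def cc2 graft_in2_def graft_carrier_def)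
  qed
  have cm: "\<forall>x\<in>?X0. ?i1 (?f1 x) = ?i2 (?f2 x)"
    by (auto simp: graft_in1_def graft_in2_def pickR_def pickL1_def)
  from H Qp m1 m2 cm obtain u where um: "mmono ?P ?RP Q RQ u"
    unfolding mis_pushout_def by blast
  have "?RP {#(Leaf 1,(Leaf 1,False)),(Leaf 2,(Leaf 2,False)),(Leaf 3,(Leaf 2,True))#} (Root,(Root,True))"
    using mgraft3 mc3r by (simp add: mprod_rel_def)
  then have "RQ (image_mset u {#(Leaf 1,(Leaf 1,False)),(Leaf 2,(Leaf 2,False)),(Leaf 3,(Leaf 2,True))#}) (u (Root,(Root,True)))"
    using um unfolding mmono_def by blast
  then show False by (simp add: RQ_def)
qed

definition "A0 = {(Root,False)}"
definition "A1 = {(Root,False),(Leaf 1,False),(Leaf 2,False)}"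
definition "A2 = {(Root,False),(Root,True),(Leaf 2,True)}"

lemma l_noexp: "\<exists>(B::(cnode \<times> cnode \<times> bool) set) RB. lbposet B RB \<and>
      (\<forall>(E::'e set) RE ev.
         \<not> lis_exponential TYPE(cnode \<times> bool) (corolla_carrier 3) (lcorolla_rel 3) B RB E RE ev)"
proof (intro exI conjI allI notI)
  define B where "B = corolla_carrier 3 \<times> graft_carrier"
  define RB where "RB = (\<lambda>w (x::cnode \<times> cnode \<times> bool). x \<in> B \<and> w = [x])"
  show "lbposet B RB" unfolding RB_def by (rule l_disc)
  fix E :: "'e set" and RE ev
  assume X: "lis_exponential TYPE(cnode \<times> bool) (corolla_carrier 3) (lcorolla_rel 3) B RB E RE ev"
  have EP: "lbposet E RE" using X unfolding lis_exponential_def by blast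
  then have E2: "\<And>a. a\<in>E \<Longrightarrow> RE [a] a"
    and E3: "\<And>as a bs. RE as a \<Longrightarrow> length bs = length as \<Longrightarrow> (\<forall>i<length as. RE (bs ! i) (as ! i)) \<Longrightarrow> RE (concat bs) a"
    unfolding lbposet_def by blast+
  have evm: "lmono (corolla_carrier 3 \<times> E) (lprod_rel (lcorolla_rel 3) RE) B RB ev"
    using X unfolding lis_exponential_def by blast
  have U: "\<exists>g. lmono A RA E RE g \<and> (\<forall>c\<in>corolla_carrier 3. \<forall>a\<in>A. ev (c, g a) = (c, a)) \<and>
           (\<forall>g'. lmono A RA E RE g' \<and> (\<forall>c\<in>corolla_carrier 3. \<forall>a\<in>A. ev (c, g' a) = (c, a))
                 \<longrightarrow> (\<forall>a\<in>A. g' a = g a))"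
    if "lbposet A RA" "lmono (corolla_carrier 3 \<times> A) (lprod_rel (lcorolla_rel 3) RA) B RB (\<lambda>x. x)" for A RA
    using X that unfolding lis_exponential_def by blast
  define R0 where "R0 = (\<lambda>w (x::cnode \<times> bool). x \<in> A0 \<and> w = [x])"
  define R1 where "R1 = (\<lambda>w (x::cnode \<times> bool). (x \<in> A1 \<and> w = [x]) \<or> (x = (Root,False) \<and> w = [(Leaf 1,False),(Leaf 2,False)]))"
  define R2 where "R2 = (\<lambda>w (x::cnode \<times> bool). (x \<in> A2 \<and> w = [x]) \<or> (x = (Root,True) \<and> w = [(Root,False),(Leaf 2,True)]))"
  have P0: "lbposet A0 R0" unfolding R0_def by (rule l_disc)
  have P1: "lbposet A1 R1" unfolding R1_def by (rule l_one) (auto simp: A1_def)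
  have P2: "lbposet A2 R2" unfolding R2_def by (rule l_one) (auto simp: A2_def)
  have M0: "lmono (corolla_carrier 3 \<times> A0) (lprod_rel (lcorolla_rel 3) R0) B RB (\<lambda>x. x)"
    unfolding lmono_def
  proof (intro conjI allI impI ballI)
    fix a assume "a \<in> corolla_carrier 3 \<times> A0" then show "a \<in> B" by (auto simp: B_def A0_def graft_carrier_def)
  next
    fix w a assume "lprod_rel (lcorolla_rel 3) R0 w a"
    then have "w = [a] \<and> a \<in> corolla_carrier 3 \<times> A0" unfolding R0_def by (rule lp3d)
    then show "RB (map (\<lambda>x. x) w) a" by (auto simp: RB_def B_def A0_def graft_carrier_def)
  qed
  have M1: "lmono (corolla_carrier 3 \<times> A1) (lprod_rel (lcorolla_rel 3) R1) B RB (\<lambda>x. x)"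
    unfolding lmono_def
  proof (intro conjI allI impI ballI)
    fix a assume "a \<in> corolla_carrier 3 \<times> A1" then show "a \<in> B" by (auto simp: B_def A1_def graft_carrier_def)
  next
    fix w a assume "lprod_rel (lcorolla_rel 3) R1 w a"
    then have "w = [a] \<and> a \<in> corolla_carrier 3 \<times> A1" unfolding R1_def by (rule lp3)
    then show "RB (map (\<lambda>x. x) w) a" by (auto simp: RB_def B_def A1_def graft_carrier_def)
  qed
  have M2: "lmono (corolla_carrier 3 \<times> A2) (lprod_rel (lcorolla_rel 3) R2) B RB (\<lambda>x. x)"
    unfolding lmono_def
  proof (intro conjI allI impI ballI)
    fix a assume "a \<in> corolla_carrier 3 \<times> A2" then show "a \<in> B" by (auto simp: B_def A2_def graft_carrier_def)
  next
    fix w a assume "lprod_rel (lcorolla_rel 3) R2 w a"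
    then have "w = [a] \<and> a \<in> corolla_carrier 3 \<times> A2" unfolding R2_def by (rule lp3)
    then show "RB (map (\<lambda>x. x) w) a" by (auto simp: RB_def B_def A2_def graft_carrier_def)
  qed
  obtain g0 where g0u: "\<And>g'. lmono A0 R0 E RE g' \<Longrightarrow> (\<forall>c\<in>corolla_carrier 3. \<forall>a\<in>A0. ev (c, g' a) = (c, a))
                 \<Longrightarrow> g' (Root,False) = g0 (Root,False)"
    using U[OF P0 M0] by (auto simp: A0_def)
  obtain g1 where g1m: "lmono A1 R1 E RE g1" and g1e: "\<forall>c\<in>corolla_carrier 3. \<forall>a\<in>A1. ev (c, g1 a) = (c, a)"
    using U[OF P1 M1] by blast
  obtain g2 where g2m: "lmono A2 R2 E RE g2" and g2e: "\<forall>c\<in>corolla_carrier 3. \<forall>a\<in>A2. ev (c, g2 a) = (c, a)"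
    using U[OF P2 M2] by blast
  have g1E: "\<And>a. a \<in> A1 \<Longrightarrow> g1 a \<in> E" using g1m unfolding lmono_def by blast
  have g2E: "\<And>a. a \<in> A2 \<Longrightarrow> g2 a \<in> E" using g2m unfolding lmono_def by blast
  have "g1 (Root,False) = g0 (Root,False)"
  proof (rule g0u)
    show "lmono A0 R0 E RE g1" unfolding lmono_def
      using g1E E2 by (auto simp: A0_def A1_def R0_def)
    show "\<forall>c\<in>corolla_carrier 3. \<forall>a\<in>A0. ev (c, g1 a) = (c, a)" using g1e by (auto simp: A0_def A1_def)
  qed
  moreover have "g2 (Root,False) = g0 (Root,False)"
  proof (rule g0u)
    show "lmono A0 R0 E RE g2" unfolding lmono_def
      using g2E E2 by (auto simp: A0_def A2_def R0_def)
    show "\<forall>c\<in>corolla_carrier 3. \<forall>a\<in>A0. ev (c, g2 a) = (c, a)" using g2e by (auto simp: A0_def A2_def)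
  qed
  ultimately have e: "g1 (Root,False) = g2 (Root,False)" by simp
  have r1: "RE [g1 (Leaf 1,False), g1 (Leaf 2,False)] (g1 (Root,False))"
    using g1m unfolding lmono_def R1_def by fastforce
  have r2: "RE [g2 (Root,False), g2 (Leaf 2,True)] (g2 (Root,True))"
    using g2m unfolding lmono_def R2_def by fastforce
  have r3: "RE [g2 (Leaf 2,True)] (g2 (Leaf 2,True))" using E2 g2E by (simp add: A2_def)
  have "RE (concat [[g1 (Leaf 1,False), g1 (Leaf 2,False)], [g2 (Leaf 2,True)]]) (g2 (Root,True))"
    apply (rule E3[OF r2])
    using r1 r3 e by (auto simp: less_Suc_eq)
  then have "RE [g1 (Leaf 1,False), g1 (Leaf 2,False), g2 (Leaf 2,True)] (g2 (Root,True))" by simp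
  then have "lprod_rel (lcorolla_rel 3) RE [(Leaf 1, g1 (Leaf 1,False)), (Leaf 2, g1 (Leaf 2,False)), (Leaf 3, g2 (Leaf 2,True))]
      (Root, g2 (Root,True))" using lc3r by (simp add: lprod_rel_def)
  then have "RB (map ev [(Leaf 1, g1 (Leaf 1,False)), (Leaf 2, g1 (Leaf 2,False)), (Leaf 3, g2 (Leaf 2,True))])
      (ev (Root, g2 (Root,True)))" using evm unfolding lmono_def by blast
  then show False by (simp add: RB_def)
qed

lemma m_noexp: "\<exists>(B::(cnode \<times> cnode \<times> bool) set) RB. mbposet B RB \<and>
      (\<forall>(E::'e set) RE ev.
         \<not> mis_exponential TYPE(cnode \<times> bool) (corolla_carrier 3) (mcorolla_rel 3) B RB E RE ev)"
proof (intro exI conjI allI notI)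
  define B where "B = corolla_carrier 3 \<times> graft_carrier"
  define RB where "RB = (\<lambda>w (x::cnode \<times> cnode \<times> bool). x \<in> B \<and> w = {#x#})"
  show "mbposet B RB" unfolding RB_def by (rule m_disc)
  fix E :: "'e set" and RE ev
  assume X: "mis_exponential TYPE(cnode \<times> bool) (corolla_carrier 3) (mcorolla_rel 3) B RB E RE ev"
  have EP: "mbposet E RE" using X unfolding mis_exponential_def by blast
  then have E2: "\<And>a. a\<in>E \<Longrightarrow> RE {#a#} a"
    and E3: "\<And>as a bs. RE (mset as) a \<Longrightarrow> length bs = length as \<Longrightarrow> (\<forall>i<length as. RE (bs ! i) (as ! i)) \<Longrightarrow> RE (sum_list bs) a"
    unfolding mbposet_def by blast+
  have evm: "mmono (corolla_carrier 3 \<times> E) (mprod_rel (mcorolla_rel 3) RE) B RB ev"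
    using X unfolding mis_exponential_def by blast
  have U: "\<exists>g. mmono A RA E RE g \<and> (\<forall>c\<in>corolla_carrier 3. \<forall>a\<in>A. ev (c, g a) = (c, a)) \<and>
           (\<forall>g'. mmono A RA E RE g' \<and> (\<forall>c\<in>corolla_carrier 3. \<forall>a\<in>A. ev (c, g' a) = (c, a))
                 \<longrightarrow> (\<forall>a\<in>A. g' a = g a))"
    if "mbposet A RA" "mmono (corolla_carrier 3 \<times> A) (mprod_rel (mcorolla_rel 3) RA) B RB (\<lambda>x. x)" for A RA
    using X that unfolding mis_exponential_def by blast
  define R0 where "R0 = (\<lambda>w (x::cnode \<times> bool). x \<in> A0 \<and> w = {#x#})"
  define R1 where "R1 = (\<lambda>w (x::cnode \<times> bool). (x \<in> A1 \<and> w = {#x#}) \<or> (x = (Root,False) \<and> w = {#(Leaf 1,False),(Leaf 2,False)#}))"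
  define R2 where "R2 = (\<lambda>w (x::cnode \<times> bool). (x \<in> A2 \<and> w = {#x#}) \<or> (x = (Root,True) \<and> w = {#(Root,False),(Leaf 2,True)#}))"
  have P0: "mbposet A0 R0" unfolding R0_def by (rule m_disc)
  have P1: "mbposet A1 R1" unfolding R1_def by (rule m_one) (auto simp: A1_def)
  have P2: "mbposet A2 R2" unfolding R2_def by (rule m_one) (auto simp: A2_def)
  have M0: "mmono (corolla_carrier 3 \<times> A0) (mprod_rel (mcorolla_rel 3) R0) B RB (\<lambda>x. x)"
    unfolding mmono_def
  proof (intro conjI allI impI ballI)
    fix a assume "a \<in> corolla_carrier 3 \<times> A0" then show "a \<in> B" by (auto simp: B_def A0_def graft_carrier_def)
  next
    fix w a assume "mprod_rel (mcorolla_rel 3) R0 w a"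
    then have "w = {#a#} \<and> a \<in> corolla_carrier 3 \<times> A0" unfolding R0_def by (rule mp3d)
    then show "RB (image_mset (\<lambda>x. x) w) a" by (auto simp: RB_def B_def A0_def graft_carrier_def)
  qed
  have M1: "mmono (corolla_carrier 3 \<times> A1) (mprod_rel (mcorolla_rel 3) R1) B RB (\<lambda>x. x)"
    unfolding mmono_def
  proof (intro conjI allI impI ballI)
    fix a assume "a \<in> corolla_carrier 3 \<times> A1" then show "a \<in> B" by (auto simp: B_def A1_def graft_carrier_def)
  next
    fix w a assume "mprod_rel (mcorolla_rel 3) R1 w a"
    then have "w = {#a#} \<and> a \<in> corolla_carrier 3 \<times> A1" unfolding R1_def by (rule mp3)
    then show "RB (image_mset (\<lambda>x. x) w) a" by (auto simp: RB_def B_def A1_def graft_carrier_def)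
  qed
  have M2: "mmono (corolla_carrier 3 \<times> A2) (mprod_rel (mcorolla_rel 3) R2) B RB (\<lambda>x. x)"
    unfolding mmono_def
  proof (intro conjI allI impI ballI)
    fix a assume "a \<in> corolla_carrier 3 \<times> A2" then show "a \<in> B" by (auto simp: B_def A2_def graft_carrier_def)
  next
    fix w a assume "mprod_rel (mcorolla_rel 3) R2 w a"
    then have "w = {#a#} \<and> a \<in> corolla_carrier 3 \<times> A2" unfolding R2_def by (rule mp3)
    then show "RB (image_mset (\<lambda>x. x) w) a" by (auto simp: RB_def B_def A2_def graft_carrier_def)
  qed
  obtain g0 where g0u: "\<And>g'. mmono A0 R0 E RE g' \<Longrightarrow> (\<forall>c\<in>corolla_carrier 3. \<forall>a\<in>A0. ev (c, g' a) = (c, a))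
                 \<Longrightarrow> g' (Root,False) = g0 (Root,False)"
    using U[OF P0 M0] by (auto simp: A0_def)
  obtain g1 where g1m: "mmono A1 R1 E RE g1" and g1e: "\<forall>c\<in>corolla_carrier 3. \<forall>a\<in>A1. ev (c, g1 a) = (c, a)"
    using U[OF P1 M1] by blast
  obtain g2 where g2m: "mmono A2 R2 E RE g2" and g2e: "\<forall>c\<in>corolla_carrier 3. \<forall>a\<in>A2. ev (c, g2 a) = (c, a)"
    using U[OF P2 M2] by blast
  have g1E: "\<And>a. a \<in> A1 \<Longrightarrow> g1 a \<in> E" using g1m unfolding mmono_def by blast
  have g2E: "\<And>a. a \<in> A2 \<Longrightarrow> g2 a \<in> E" using g2m unfolding mmono_def by blast
  have "g1 (Root,False) = g0 (Root,False)"
  proof (rule g0u)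
    show "mmono A0 R0 E RE g1" unfolding mmono_def
      using g1E E2 by (auto simp: A0_def A1_def R0_def)
    show "\<forall>c\<in>corolla_carrier 3. \<forall>a\<in>A0. ev (c, g1 a) = (c, a)" using g1e by (auto simp: A0_def A1_def)
  qed
  moreover have "g2 (Root,False) = g0 (Root,False)"
  proof (rule g0u)
    show "mmono A0 R0 E RE g2" unfolding mmono_def
      using g2E E2 by (auto simp: A0_def A2_def R0_def)
    show "\<forall>c\<in>corolla_carrier 3. \<forall>a\<in>A0. ev (c, g2 a) = (c, a)" using g2e by (auto simp: A0_def A2_def)
  qed
  ultimately have e: "g1 (Root,False) = g2 (Root,False)" by simp
  have r1: "RE {#g1 (Leaf 1,False), g1 (Leaf 2,False)#} (g1 (Root,False))"
    using g1m unfolding mmono_def R1_def by fastforce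
  have r2: "RE {#g2 (Root,False), g2 (Leaf 2,True)#} (g2 (Root,True))"
    using g2m unfolding mmono_def R2_def by fastforce
  have r3: "RE {#g2 (Leaf 2,True)#} (g2 (Leaf 2,True))" using E2 g2E by (simp add: A2_def)
  have r2': "RE (mset [g2 (Root,False), g2 (Leaf 2,True)]) (g2 (Root,True))" using r2 by simp
  have "RE (sum_list [{#g1 (Leaf 1,False), g1 (Leaf 2,False)#}, {#g2 (Leaf 2,True)#}]) (g2 (Root,True))"
    apply (rule E3[OF r2'])
    using r1 r3 e by (auto simp: less_Suc_eq)
  then have "RE {#g1 (Leaf 1,False), g1 (Leaf 2,False), g2 (Leaf 2,True)#} (g2 (Root,True))" by (simp add: add_mset_commute)
  then have "mprod_rel (mcorolla_rel 3) RE {#(Leaf 1, g1 (Leaf 1,False)), (Leaf 2, g1 (Leaf 2,False)), (Leaf 3, g2 (Leaf 2,True))#}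
      (Root, g2 (Root,True))" using mc3r by (simp add: mprod_rel_def)
  then have "RB (image_mset ev {#(Leaf 1, g1 (Leaf 1,False)), (Leaf 2, g1 (Leaf 2,False)), (Leaf 3, g2 (Leaf 2,True))#})
      (ev (Root, g2 (Root,True)))" using evm unfolding mmono_def by blast
  then show False by (simp add: RB_def)
qed


theorem proposition3p2:
  shows
  "\<comment> \<open>non-commutative setting\<close>
   (\<forall>(A::'a set) RA (B::'b set) RB. lbposet A RA \<and> lbposet B RB \<longrightarrow>
      lis_product TYPE('c) A RA B RB (A \<times> B) (lprod_rel RA RB) fst snd) \<and>
   lis_terminal TYPE('c) (UNIV::unit set) (\<lambda>_ _. True) \<and>
   lis_pushout TYPE('q) (UNIV::unit set) lstar_rel
      (corolla_carrier 2) (lcorolla_rel 2) (corolla_carrier 2) (lcorolla_rel 2)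
      pickR pickL1 graft_carrier lgraft_rel graft_in1 graft_in2 \<and>
   \<not> lis_pushout TYPE(cnode \<times> cnode \<times> bool)
      (corolla_carrier 3 \<times> (UNIV::unit set)) (lprod_rel (lcorolla_rel 3) lstar_rel)
      (corolla_carrier 3 \<times> corolla_carrier 2) (lprod_rel (lcorolla_rel 3) (lcorolla_rel 2))
      (corolla_carrier 3 \<times> corolla_carrier 2) (lprod_rel (lcorolla_rel 3) (lcorolla_rel 2))
      (map_prod id pickR) (map_prod id pickL1)
      (corolla_carrier 3 \<times> graft_carrier) (lprod_rel (lcorolla_rel 3) lgraft_rel)
      (map_prod id graft_in1) (map_prod id graft_in2) \<and>
   (\<exists>(B::(cnode \<times> cnode \<times> bool) set) RB. lbposet B RB \<and>
      (\<forall>(E::'e set) RE ev.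
         \<not> lis_exponential TYPE(cnode \<times> bool) (corolla_carrier 3) (lcorolla_rel 3) B RB E RE ev)) \<and>
   \<comment> \<open>commutative setting\<close>
   (\<forall>(A::'a set) RA (B::'b set) RB. mbposet A RA \<and> mbposet B RB \<longrightarrow>
      mis_product TYPE('c) A RA B RB (A \<times> B) (mprod_rel RA RB) fst snd) \<and>
   mis_terminal TYPE('c) (UNIV::unit set) (\<lambda>_ _. True) \<and>
   mis_pushout TYPE('q) (UNIV::unit set) mstar_rel
      (corolla_carrier 2) (mcorolla_rel 2) (corolla_carrier 2) (mcorolla_rel 2)
      pickR pickL1 graft_carrier mgraft_rel graft_in1 graft_in2 \<and>
   \<not> mis_pushout TYPE(cnode \<times> cnode \<times> bool)
      (corolla_carrier 3 \<times> (UNIV::unit set)) (mprod_rel (mcorolla_rel 3) mstar_rel)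
      (corolla_carrier 3 \<times> corolla_carrier 2) (mprod_rel (mcorolla_rel 3) (mcorolla_rel 2))
      (corolla_carrier 3 \<times> corolla_carrier 2) (mprod_rel (mcorolla_rel 3) (mcorolla_rel 2))
      (map_prod id pickR) (map_prod id pickL1)
      (corolla_carrier 3 \<times> graft_carrier) (mprod_rel (mcorolla_rel 3) mgraft_rel)
      (map_prod id graft_in1) (map_prod id graft_in2) \<and>
   (\<exists>(B::(cnode \<times> cnode \<times> bool) set) RB. mbposet B RB \<and>
      (\<forall>(E::'e set) RE ev.
         \<not> mis_exponential TYPE(cnode \<times> bool) (corolla_carrier 3) (mcorolla_rel 3) B RB E RE ev))"
    apply (intro conjI)
  subgoal using l_prod by blast
  subgoal by (rule l_term)
  subgoal by (rule l_push)
  subgoal by (rule l_notpush)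
  subgoal by (rule l_noexp)
  subgoal using m_prod by blast
  subgoal by (rule m_term)
  subgoal by (rule m_push)
  subgoal by (rule m_notpush)
  subgoal by (rule m_noexp)
  done

end
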